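(* Let $N$ be an acyclic CP-net over features $X_1,\dots,X_n$ with finite domains, and let $\mathrm{pen}$ be the penalty function of the weighted soft-constraint approximation of $N$ defined in the context. Then for all outcomes $\alpha,\beta$, if $\alpha \succ_N \beta$ then $\mathrm{pen}(\alpha) < \mathrm{pen}(\beta)$.
   Context: A CP-net $N$ consists of a directed graph on the features, where $Pa(X)$ denotes the set of parents of $X$, together with, for every feature $X$ and every assignment $u$ to $Pa(X)$, a strict total order $\succ_{X,u}$ on $D(X)$. $N$ is acyclic if its graph is acyclic. An outcome is a complete assignment to all features. The relation $\succ_N$ is the transitive closure of improving flips: $\alpha$ is obtained from $\beta$ by an improving flip if $\alpha$ and $\beta$ differ only on one feature $X$ and $\alpha(X) \succ_{X,u} \beta(X)$, where $u$ is the common restriction of $\alpha,\beta$ to $Pa(X)$. Weighted approximation: for a feature $X$, a parent assignment $u$ and $x\in D(X)$, let $p_u(x)\in\{0,\dots,|D(X)|-1\}$ be the number of values of $D(X)$ strictly above $x$ in $\succ_{X,u}$. Weights are defined by processing the features in a reverse topological order of the graph of $N$: $w(X)=1$ if $X$ has no children, and otherwise $w(X)=\sum_{Y:\,X\in Pa(Y)} w(Y)\cdot|D(Y)|$. For an outcome $\alpha$, $\mathrm{pen}(\alpha)=\sum_{X} w(X)\cdot p_{\alpha|_{Pa(X)}}(\alpha(X))$, where $\alpha|_{Pa(X)}$ is the restriction of $\alpha$ to $Pa(X)$. (This is the weighted/min+ soft constraint problem, with one soft constraint on $\{X\}\cup Pa(X)$ for each feature $X$; smaller total penalty means more preferred.)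 *)

theory Defs
  imports Main "HOL-Library.FuncSet"
begin

text \<open>A CP-net over a finite type of features 'f with values of type 'v:
  Pa X  -- the parents of feature X,
  D X   -- the (finite) domain of X,
  ord X u -- the strict total order on D X for the parent assignment u;
         (y, x) \<in> ord X u means y is preferred to x.
  A parent assignment u is a function 'f \<Rightarrow> 'v restricted to Pa X
  (value undefined outside Pa X), i.e. an element of PiE (Pa X) D.\<close>

definition dep_graph :: "('f \<Rightarrow> 'f set) \<Rightarrow> 'f rel" where
  "dep_graph Pa = {(Y, X). Y \<in> Pa X}"

definition cp_net :: "('f \<Rightarrow> 'f set) \<Rightarrow> ('f \<Rightarrow> 'v set) \<Rightarrow> ('f \<Rightarrow> ('f \<Rightarrow> 'v) \<Rightarrow> 'v rel) \<Rightarrow> bool" where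
  "cp_net Pa D ord \<longleftrightarrow>
     (\<forall>X. \<forall>u \<in> PiE (Pa X) D. strict_linear_order_on (D X) (ord X u))"

definition acyclic_cp_net :: "('f \<Rightarrow> 'f set) \<Rightarrow> ('f \<Rightarrow> 'v set) \<Rightarrow> ('f \<Rightarrow> ('f \<Rightarrow> 'v) \<Rightarrow> 'v rel) \<Rightarrow> bool" where
  "acyclic_cp_net Pa D ord \<longleftrightarrow> cp_net Pa D ord \<and> acyclic (dep_graph Pa)"

definition outcome :: "('f \<Rightarrow> 'v set) \<Rightarrow> ('f \<Rightarrow> 'v) \<Rightarrow> bool" where
  "outcome D \<alpha> \<longleftrightarrow> (\<forall>X. \<alpha> X \<in> D X)"

definition improving_flip :: "('f \<Rightarrow> 'f set) \<Rightarrow> ('f \<Rightarrow> 'v set) \<Rightarrow> ('f \<Rightarrow> ('f \<Rightarrow> 'v) \<Rightarrow> 'v rel)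
    \<Rightarrow> (('f \<Rightarrow> 'v) \<times> ('f \<Rightarrow> 'v)) set" where
  "improving_flip Pa D ord = {(\<alpha>, \<beta>). outcome D \<alpha> \<and> outcome D \<beta> \<and>
     (\<exists>X. (\<forall>Z. Z \<noteq> X \<longrightarrow> \<alpha> Z = \<beta> Z) \<and>
          restrict \<alpha> (Pa X) = restrict \<beta> (Pa X) \<and>
          (\<alpha> X, \<beta> X) \<in> ord X (restrict \<alpha> (Pa X)))}"

definition cp_pref :: "('f \<Rightarrow> 'f set) \<Rightarrow> ('f \<Rightarrow> 'v set) \<Rightarrow> ('f \<Rightarrow> ('f \<Rightarrow> 'v) \<Rightarrow> 'v rel)
    \<Rightarrow> (('f \<Rightarrow> 'v) \<times> ('f \<Rightarrow> 'v)) set" where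
  "cp_pref Pa D ord = (improving_flip Pa D ord)\<^sup>+"

definition children :: "('f \<Rightarrow> 'f set) \<Rightarrow> 'f \<Rightarrow> 'f set" where
  "children Pa X = {Y. X \<in> Pa Y}"

definition weight :: "('f \<Rightarrow> 'f set) \<Rightarrow> ('f \<Rightarrow> 'v set) \<Rightarrow> 'f \<Rightarrow> nat" where
  "weight Pa D = wfrec {(Y, X). X \<in> Pa Y}
     (\<lambda>w X. if children Pa X = {} then 1
            else (\<Sum>Y\<in>children Pa X. w Y * card (D Y)))"

definition rank :: "('f \<Rightarrow> 'v set) \<Rightarrow> ('f \<Rightarrow> ('f \<Rightarrow> 'v) \<Rightarrow> 'v rel) \<Rightarrow> 'f \<Rightarrow> ('f \<Rightarrow> 'v) \<Rightarrow> 'v \<Rightarrow> nat" where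
  "rank D ord X u x = card {y \<in> D X. (y, x) \<in> ord X u}"

definition pen :: "('f::finite \<Rightarrow> 'f set) \<Rightarrow> ('f \<Rightarrow> 'v set) \<Rightarrow> ('f \<Rightarrow> ('f \<Rightarrow> 'v) \<Rightarrow> 'v rel)
    \<Rightarrow> ('f \<Rightarrow> 'v) \<Rightarrow> nat" where
  "pen Pa D ord \<alpha> = (\<Sum>X\<in>UNIV. weight Pa D X * rank D ord X (restrict \<alpha> (Pa X)) (\<alpha> X))"

end

theory Submission
  imports Defs
begin

lemma wf_R:
  fixes Pa :: "'f::finite \<Rightarrow> 'f set"
  assumes "acyclic (dep_graph Pa)"
  shows "wf {(Y, X). X \<in> Pa Y}"
proof -
  have eq: "{(Y, X). X \<in> Pa Y} = (dep_graph Pa)\<inverse>" by (auto simp: dep_graph_def)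
  show ?thesis unfolding eq
    by (rule finite_acyclic_wf_converse) (auto simp: assms)
qed

lemma weight_eq:
  fixes Pa :: "'f::finite \<Rightarrow> 'f set"
  assumes "acyclic (dep_graph Pa)"
  shows "weight Pa D X = (if children Pa X = {} then 1
            else (\<Sum>Y\<in>children Pa X. weight Pa D Y * card (D Y)))"
proof -
  have "weight Pa D X = (if children Pa X = {} then 1
            else (\<Sum>Y\<in>children Pa X. cut (weight Pa D) {(Y, X). X \<in> Pa Y} X Y * card (D Y)))"
    unfolding weight_def by (subst wfrec[OF wf_R[OF assms]]) simp
  also have "\<dots> = (if children Pa X = {} then 1
            else (\<Sum>Y\<in>children Pa X. weight Pa D Y * card (D Y)))"
    by (intro if_cong refl sum.cong) (auto simp: cut_apply children_def)
  finally show ?thesis .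
qed

lemma weight_pos:
  fixes Pa :: "'f::finite \<Rightarrow> 'f set"
  assumes "acyclic (dep_graph Pa)" and "\<forall>X. finite (D X)" and "\<forall>X. D X \<noteq> {}"
  shows "weight Pa D X \<ge> 1"
  using wf_R[OF assms(1)]
proof (induction X rule: wf_induct_rule)
  case (less X)
  show ?case
  proof (cases "children Pa X = {}")
    case True then show ?thesis by (simp add: weight_eq[OF assms(1)])
  next
    case False
    then obtain Y where Y: "Y \<in> children Pa X" by blast
    have w: "weight Pa D Y \<ge> 1" using less Y by (auto simp: children_def)
    have c: "card (D Y) \<ge> 1" using assms(2,3) by (simp add: Suc_le_eq card_gt_0_iff)
    have "1 \<le> weight Pa D Y * card (D Y)" using w c by (metis mult_le_mono nat_mult_1)
    also have "\<dots> \<le> (\<Sum>Y\<in>children Pa X. weight Pa D Y * card (D Y))"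
      by (rule member_le_sum) (use Y in auto)
    finally show ?thesis using False by (simp add: weight_eq[OF assms(1)])
  qed
qed

lemma rank_lt:
  assumes "strict_linear_order_on (D X) (ord X u)" "x \<in> D X" "finite (D X)"
  shows "rank D ord X u x < card (D X)"
proof -
  have "{y \<in> D X. (y, x) \<in> ord X u} \<subset> D X"
    using assms(1,2) by (auto simp: strict_linear_order_on_def irrefl_def)
  then show ?thesis unfolding rank_def using assms(3) by (simp add: psubset_card_mono)
qed

lemma rank_mono:
  assumes "strict_linear_order_on (D X) (ord X u)" "a \<in> D X" "b \<in> D X" "(a, b) \<in> ord X u"
    "finite (D X)"
  shows "rank D ord X u a < rank D ord X u b"
proof -
  have "{y \<in> D X. (y, a) \<in> ord X u} \<subset> {y \<in> D X. (y, b) \<in> ord X u}"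
    using assms(1-4) unfolding strict_linear_order_on_def irrefl_def trans_def by blast
  then show ?thesis unfolding rank_def using assms(5) by (simp add: psubset_card_mono)
qed

lemma flip_lt:
  fixes Pa :: "'f::finite \<Rightarrow> 'f set"
    and D :: "'f \<Rightarrow> 'v set"
    and ord :: "'f \<Rightarrow> ('f \<Rightarrow> 'v) \<Rightarrow> 'v rel"
  assumes net: "acyclic_cp_net Pa D ord"
    and fin: "\<forall>X. finite (D X)"
    and fl: "(\<alpha>, \<beta>) \<in> improving_flip Pa D ord"
  shows "pen Pa D ord \<alpha> < pen Pa D ord \<beta>"
proof -
  have ac: "acyclic (dep_graph Pa)" and cp: "cp_net Pa D ord"
    using net by (auto simp: acyclic_cp_net_def)
  from fl obtain X where oa: "outcome D \<alpha>" and ob: "outcome D \<beta>"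
    and same: "\<forall>Z. Z \<noteq> X \<longrightarrow> \<alpha> Z = \<beta> Z"
    and rx: "restrict \<alpha> (Pa X) = restrict \<beta> (Pa X)"
    and better: "(\<alpha> X, \<beta> X) \<in> ord X (restrict \<alpha> (Pa X))"
    by (auto simp: improving_flip_def)
  have ne: "\<forall>X. D X \<noteq> {}" using oa by (auto simp: outcome_def)
  have slo: "strict_linear_order_on (D Z) (ord Z (restrict \<gamma> (Pa Z)))" if "outcome D \<gamma>" for Z \<gamma>
    using cp that by (auto simp: cp_net_def outcome_def)
  have XnP: "X \<notin> Pa X"
  proof
    assume "X \<in> Pa X"
    then have "(X, X) \<in> (dep_graph Pa)\<^sup>+" by (auto simp: dep_graph_def)
    then show False using ac by (auto simp: acyclic_def)
  qed
  define f where "f \<gamma> Z = weight Pa D Z * rank D ord Z (restrict \<gamma> (Pa Z)) (\<gamma> Z)" for \<gamma> Z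
  define S where "S = children Pa X"
  have XS: "X \<notin> S" using XnP by (auto simp: S_def children_def)
  have rest: "f \<alpha> Z = f \<beta> Z" if "Z \<notin> S" "Z \<noteq> X" for Z
  proof -
    have "restrict \<alpha> (Pa Z) = restrict \<beta> (Pa Z)"
      using that same by (auto simp: S_def children_def restrict_def intro!: ext)
    then show ?thesis using same that by (simp add: f_def)
  qed
  have split: "pen Pa D ord \<gamma> = f \<gamma> X + sum (f \<gamma>) S + sum (f \<gamma>) (UNIV - {X} - S)" for \<gamma>
  proof -
    have "pen Pa D ord \<gamma> = sum (f \<gamma>) UNIV" by (simp add: pen_def f_def)
    also have "\<dots> = f \<gamma> X + sum (f \<gamma>) (UNIV - {X})"
      by (simp add: sum.remove)
    also have "sum (f \<gamma>) (UNIV - {X}) = sum (f \<gamma>) S + sum (f \<gamma>) (UNIV - {X} - S)"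
    proof -
      have "UNIV - {X} = S \<union> (UNIV - {X} - S)" using XS by auto
      then show ?thesis by (metis Diff_disjoint finite sum.union_disjoint)
    qed
    finally show ?thesis by simp
  qed
  have R: "sum (f \<alpha>) (UNIV - {X} - S) = sum (f \<beta>) (UNIV - {X} - S)"
    by (rule sum.cong) (auto intro: rest)
  have rankX: "rank D ord X (restrict \<alpha> (Pa X)) (\<alpha> X) < rank D ord X (restrict \<alpha> (Pa X)) (\<beta> X)"
    by (rule rank_mono[where D=D and ord=ord, OF slo[OF oa, of X]]) (use oa ob better fin in \<open>auto simp: outcome_def\<close>)
  have fX: "f \<alpha> X + weight Pa D X \<le> f \<beta> X"
  proof -
    have "f \<alpha> X + weight Pa D X = weight Pa D X * (rank D ord X (restrict \<alpha> (Pa X)) (\<alpha> X) + 1)"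
      by (simp add: f_def algebra_simps)
    also have "\<dots> \<le> weight Pa D X * rank D ord X (restrict \<alpha> (Pa X)) (\<beta> X)"
      using rankX by (intro mult_le_mono2) simp
    also have "\<dots> = f \<beta> X" by (simp add: f_def rx)
    finally show ?thesis .
  qed
  have fS: "sum (f \<alpha>) S < weight Pa D X"
  proof (cases "S = {}")
    case True then show ?thesis using weight_pos[OF ac fin ne, of X] by simp
  next
    case False
    have "sum (f \<alpha>) S < (\<Sum>Y\<in>S. weight Pa D Y * card (D Y))"
    proof (rule sum_strict_mono)
      fix Y assume "Y \<in> S"
      have "rank D ord Y (restrict \<alpha> (Pa Y)) (\<alpha> Y) < card (D Y)"
        by (rule rank_lt[where D=D and ord=ord, OF slo[OF oa, of Y]]) (use oa fin in \<open>auto simp: outcome_def\<close>)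
      moreover have "weight Pa D Y \<ge> 1" using weight_pos[OF ac fin ne] .
      ultimately show "f \<alpha> Y < weight Pa D Y * card (D Y)" by (simp add: f_def)
    qed (use False in auto)
    also have "\<dots> = weight Pa D X" using False by (simp add: weight_eq[OF ac] S_def)
    finally show ?thesis .
  qed
  show ?thesis unfolding split[of \<alpha>] split[of \<beta>] R using fX fS by linarith
qed

theorem theorem3:
  fixes Pa :: "'f::finite \<Rightarrow> 'f set"
    and D :: "'f \<Rightarrow> 'v set"
    and ord :: "'f \<Rightarrow> ('f \<Rightarrow> 'v) \<Rightarrow> 'v rel"
    and \<alpha> \<beta> :: "'f \<Rightarrow> 'v"
  assumes "acyclic_cp_net Pa D ord"
    and "\<forall>X. finite (D X)"
    and "(\<alpha>, \<beta>) \<in> cp_pref Pa D ord"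
  shows "pen Pa D ord \<alpha> < pen Pa D ord \<beta>"
  using assms(3) unfolding cp_pref_def
proof (induction rule: trancl_induct)
  case (base y)
  then show ?case using flip_lt[OF assms(1,2)] by blast
next
  case (step y z)
  then show ?case using flip_lt[OF assms(1,2), of y z] by simp
qed

end
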